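(* Let $(\mathrm{G},\mu)$ be a Lorentzian flat Lie group. Then $\mathrm{G}$ admits a timelike left-invariant Killing vector field (for $\mu$) if and only if $\mathrm{G}$ admits a left-invariant Riemannian metric whose Levi-Civita connection coincides with the Levi-Civita connection of $\mu$.
   Context: A Lorentzian flat Lie group is a connected Lie group $\mathrm{G}$ endowed with a left-invariant flat pseudo-Riemannian metric $\mu$ of signature $(-,+,\dots,+)$. A vector field $X$ is timelike if $\mu(X,X)<0$ everywhere, and Killing if the flow of $X$ preserves $\mu$. *)

theory Defs
  imports "HOL-Analysis.Analysis"
begin

text \<open>Everything is expressed at the level of the Lie algebra of the (connected) Lie group:
left-invariant vector fields are identified with elements of the Lie algebra,
left-invariant tensors with tensors on the Lie algebra.\<close>

definition lie_algebra :: "('a::euclidean_space \<Rightarrow> 'a \<Rightarrow> 'a) \<Rightarrow> bool" where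
  "lie_algebra br \<longleftrightarrow> bilinear br \<and> (\<forall>x y. br x y = - br y x) \<and>
     (\<forall>x y z. br x (br y z) + br y (br z x) + br z (br x y) = 0)"

definition sym_bilinear_form :: "('a::euclidean_space \<Rightarrow> 'a \<Rightarrow> real) \<Rightarrow> bool" where
  "sym_bilinear_form B \<longleftrightarrow> bilinear B \<and> (\<forall>x y. B x y = B y x)"

definition nondegenerate :: "('a::euclidean_space \<Rightarrow> 'a \<Rightarrow> real) \<Rightarrow> bool" where
  "nondegenerate B \<longleftrightarrow> (\<forall>x. (\<forall>y. B x y = 0) \<longrightarrow> x = 0)"

definition lorentzian_form :: "('a::euclidean_space \<Rightarrow> 'a \<Rightarrow> real) \<Rightarrow> bool" where
  "lorentzian_form B \<longleftrightarrow> sym_bilinear_form B \<and> nondegenerate B \<and> (\<exists>v. B v v < 0) \<and>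
     (\<forall>W. subspace W \<and> (\<forall>w\<in>W. w \<noteq> 0 \<longrightarrow> B w w < 0) \<longrightarrow> dim W \<le> 1)"

definition riemannian_form :: "('a::euclidean_space \<Rightarrow> 'a \<Rightarrow> real) \<Rightarrow> bool" where
  "riemannian_form g \<longleftrightarrow> sym_bilinear_form g \<and> (\<forall>x. x \<noteq> 0 \<longrightarrow> g x x > 0)"

text \<open>Levi-Civita connection of a left-invariant metric, restricted to left-invariant fields:
bilinear, torsion free and metric (B of two left-invariant fields is constant).\<close>
definition is_levi_civita ::
  "('a::euclidean_space \<Rightarrow> 'a \<Rightarrow> real) \<Rightarrow> ('a \<Rightarrow> 'a \<Rightarrow> 'a) \<Rightarrow> ('a \<Rightarrow> 'a \<Rightarrow> 'a) \<Rightarrow> bool" where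
  "is_levi_civita B br nab \<longleftrightarrow> bilinear nab \<and>
     (\<forall>u v. nab u v - nab v u = br u v) \<and>
     (\<forall>u v w. B (nab u v) w + B v (nab u w) = 0)"

definition levi_civita ::
  "('a::euclidean_space \<Rightarrow> 'a \<Rightarrow> real) \<Rightarrow> ('a \<Rightarrow> 'a \<Rightarrow> 'a) \<Rightarrow> ('a \<Rightarrow> 'a \<Rightarrow> 'a)" where
  "levi_civita B br = (THE nab. is_levi_civita B br nab)"

definition flat_connection :: "('a::euclidean_space \<Rightarrow> 'a \<Rightarrow> 'a) \<Rightarrow> ('a \<Rightarrow> 'a \<Rightarrow> 'a) \<Rightarrow> bool" where
  "flat_connection br nab \<longleftrightarrow>
     (\<forall>u v w. nab u (nab v w) - nab v (nab u w) - nab (br u v) w = 0)"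

definition killing :: "('a::euclidean_space \<Rightarrow> 'a \<Rightarrow> real) \<Rightarrow> ('a \<Rightarrow> 'a \<Rightarrow> 'a) \<Rightarrow> 'a \<Rightarrow> bool" where
  "killing B br X \<longleftrightarrow>
     (\<forall>u v. B (levi_civita B br u X) v + B u (levi_civita B br v X) = 0)"

end

theory Submission
  imports Defs
begin


lemma real_lin_expand:
  fixes f :: "'a::euclidean_space \<Rightarrow> real"
  assumes "linear f"
  shows "f w = (\<Sum>i\<in>Basis. (w \<bullet> i) * f i)"
proof -
  have "f w = f (\<Sum>i\<in>Basis. (w \<bullet> i) *\<^sub>R i)" by (simp add: euclidean_representation)
  also have "\<dots> = (\<Sum>i\<in>Basis. (w \<bullet> i) * f i)"
    using assms by (simp add: linear_sum linear_scale)
  finally show ?thesis .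
qed

lemma bil_rep:
  fixes B :: "'a::euclidean_space \<Rightarrow> 'a \<Rightarrow> real"
  assumes "bilinear B"
  shows "B z w = (\<Sum>i\<in>Basis. B z i *\<^sub>R i) \<bullet> w"
proof -
  have "linear (B z)" using assms by (simp add: bilinear_def)
  then have "B z w = (\<Sum>i\<in>Basis. (w \<bullet> i) * B z i)" by (rule real_lin_expand)
  also have "\<dots> = (\<Sum>i\<in>Basis. B z i *\<^sub>R i) \<bullet> w"
    unfolding inner_sum_left by (rule sum.cong) (simp_all add: inner_commute)
  finally show ?thesis .
qed

lemma riesz_rep:
  fixes B :: "'a::euclidean_space \<Rightarrow> 'a \<Rightarrow> real"
  assumes bl: "bilinear B" and nd: "nondegenerate B" and lf: "linear f"
  shows "\<exists>z. \<forall>w. B z w = f w"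
proof -
  define Phi where "Phi z = (\<Sum>i\<in>Basis. B z i *\<^sub>R i)" for z
  have lin: "linear Phi"
  proof -
    show ?thesis unfolding Phi_def
      by (intro linearI) (simp_all add: bilinear_ladd[OF bl] bilinear_lmul[OF bl] scaleR_add_left sum.distrib scaleR_sum_right)
  qed
  have inj: "inj Phi"
    unfolding linear_injective_0[OF lin]
  proof (intro allI impI)
    fix x assume "Phi x = 0"
    then have "\<forall>y. B x y = 0" using bil_rep[OF bl, of x] unfolding Phi_def by (metis inner_zero_left)
    then show "x = 0" using nd unfolding nondegenerate_def by blast
  qed
  then have "surj Phi" using lin by (rule linear_inj_imp_surj[rotated])
  then obtain z where z: "Phi z = (\<Sum>i\<in>Basis. f i *\<^sub>R i)" by (metis surjD)
  show ?thesis
  proof (intro exI allI)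
    fix w
    have "B z w = (\<Sum>i\<in>Basis. f i *\<^sub>R i) \<bullet> w" using bil_rep[OF bl, of z w] z unfolding Phi_def by simp
    also have "\<dots> = (\<Sum>i\<in>Basis. (w \<bullet> i) * f i)"
      unfolding inner_sum_left by (rule sum.cong) (simp_all add: inner_commute)
    also have "\<dots> = f w" by (rule real_lin_expand[OF lf, symmetric])
    finally show "B z w = f w" .
  qed
qed



lemma s3_zero:
  assumes sy: "\<And>u v w. T u v w = T v u w" and sk: "\<And>u v w. T u v w = - T u w v"
  shows "T u v w = (0::real)"
proof -
  have "T u v w = - T u w v" by (rule sk)
  also have "\<dots> = - T w u v" by (simp add: sy)
  also have "\<dots> = T w v u" by (simp add: sk[of w u v])
  also have "\<dots> = T v w u" by (simp add: sy)
  also have "\<dots> = - T v u w" by (rule sk)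
  also have "\<dots> = - T u v w" by (simp add: sy)
  finally show ?thesis by simp
qed

lemma nd_eq:
  assumes "bilinear B" "nondegenerate B" "\<And>w. B x w = B y w"
  shows "x = y"
proof -
  have "\<forall>w. B (x - y) w = 0" using assms(3) by (simp add: bilinear_lsub[OF assms(1)])
  then have "x - y = 0" using assms(2) unfolding nondegenerate_def by blast
  then show ?thesis by simp
qed

lemma lc_unique:
  fixes B :: "'a::euclidean_space \<Rightarrow> 'a \<Rightarrow> real"
  assumes sb: "sym_bilinear_form B" and nd: "nondegenerate B"
    and l1: "is_levi_civita B br n1" and l2: "is_levi_civita B br n2"
  shows "n1 = n2"
proof -
  have bl: "bilinear B" and sy: "\<And>x y. B x y = B y x" using sb by (auto simp: sym_bilinear_form_def)
  have t1: "\<And>u v. n1 u v - n1 v u = br u v" and m1: "\<And>u v w. B (n1 u v) w + B v (n1 u w) = 0"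
    using l1 by (auto simp: is_levi_civita_def)
  have t2: "\<And>u v. n2 u v - n2 v u = br u v" and m2: "\<And>u v w. B (n2 u v) w + B v (n2 u w) = 0"
    using l2 by (auto simp: is_levi_civita_def)
  define T where "T u v w = B (n1 u v - n2 u v) w" for u v w
  have "T u v w = 0" for u v w
  proof (rule s3_zero[of T])
    fix u v w
    have "n1 u v - n2 u v = n1 v u - n2 v u" using t1[of u v] t2[of u v]
      by (simp add: algebra_simps)
    then show "T u v w = T v u w" unfolding T_def by simp
    show "T u v w = - T u w v" unfolding T_def bilinear_lsub[OF bl]
      using m1[of u v w] m2[of u v w] sy[of v "n1 u w"] sy[of v "n2 u w"] by linarith
  qed
  then have "\<And>u v. n1 u v - n2 u v = 0" using nd unfolding T_def nondegenerate_def by blast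
  then show ?thesis by (intro ext) simp
qed

lemma lc_exists:
  fixes B :: "'a::euclidean_space \<Rightarrow> 'a \<Rightarrow> real"
  assumes sb: "sym_bilinear_form B" and nd: "nondegenerate B"
    and bb: "bilinear br" and ba: "\<And>x y. br x y = - br y x"
  shows "\<exists>nab. is_levi_civita B br nab"
proof -
  have bl: "bilinear B" and sy: "\<And>x y. B x y = B y x" using sb by (auto simp: sym_bilinear_form_def)
  define K where "K u v w = (B (br u v) w - B (br v w) u + B (br w u) v) / 2" for u v w
  have lin: "linear (K u v)" for u v
    unfolding K_def
    by (intro linearI) (simp_all add: bilinear_ladd[OF bl] bilinear_lmul[OF bl] bilinear_radd[OF bl] bilinear_rmul[OF bl]
        bilinear_ladd[OF bb] bilinear_lmul[OF bb] bilinear_radd[OF bb] bilinear_rmul[OF bb] field_simps)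
  define nab where "nab u v = (SOME z. \<forall>w. B z w = K u v w)" for u v
  have N: "B (nab u v) w = K u v w" for u v w
  proof -
    have "\<exists>z. \<forall>w. B z w = K u v w" by (rule riesz_rep[OF bl nd lin])
    then have "\<forall>w. B (nab u v) w = K u v w" unfolding nab_def by (rule someI_ex)
    then show ?thesis by blast
  qed
  note simps = bilinear_ladd[OF bl] bilinear_lmul[OF bl] bilinear_radd[OF bl] bilinear_rmul[OF bl]
        bilinear_ladd[OF bb] bilinear_lmul[OF bb] bilinear_radd[OF bb] bilinear_rmul[OF bb]
        bilinear_lneg[OF bl] bilinear_rneg[OF bl] bilinear_lsub[OF bl] bilinear_rsub[OF bl]
  have "is_levi_civita B br nab"
    unfolding is_levi_civita_def
  proof (intro conjI allI)
    show "bilinear nab"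
      unfolding bilinear_def linear_iff
      by (intro conjI allI; rule nd_eq[OF bl nd]; simp add: simps N K_def field_simps)
  next
    fix u v
    show "nab u v - nab v u = br u v"
    proof (rule nd_eq[OF bl nd])
      fix w
      have "br v u = - br u v" "br w v = - br v w" "br u w = - br w u" by (rule ba)+
      then show "B (nab u v - nab v u) w = B (br u v) w"
        by (simp add: simps N K_def sy[of v "br _ _"] sy[of u "br _ _"] field_simps)
    qed
  next
    fix u v w
    have "br v u = - br u v" "br w v = - br v w" "br u w = - br w u" by (rule ba)+
    then show "B (nab u v) w + B v (nab u w) = 0"
      by (simp add: simps N K_def sy[of v "nab _ _"] sy[of w "br _ _"] sy[of v "br _ _"] sy[of u "br _ _"] field_simps)
  qed
  then show ?thesis by blast
qed

lemma lc_is: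
  fixes B :: "'a::euclidean_space \<Rightarrow> 'a \<Rightarrow> real"
  assumes sb: "sym_bilinear_form B" and nd: "nondegenerate B"
    and bb: "bilinear br" and ba: "\<And>x y. br x y = - br y x"
  shows "is_levi_civita B br (levi_civita B br)"
  unfolding levi_civita_def
proof -
  obtain n where n: "is_levi_civita B br n" using lc_exists[OF assms] by blast
  show "is_levi_civita B br (THE nab. is_levi_civita B br nab)"
    by (rule theI[of _ n]) (use n lc_unique[OF sb nd] in blast)+
qed

lemma lc_eq:
  fixes B :: "'a::euclidean_space \<Rightarrow> 'a \<Rightarrow> real"
  assumes sb: "sym_bilinear_form B" and nd: "nondegenerate B"
    and l: "is_levi_civita B br nab"
  shows "levi_civita B br = nab"
  unfolding levi_civita_def
proof (rule the_equality)
  show "is_levi_civita B br nab" by (rule l)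
  fix x assume "is_levi_civita B br x"
  then show "x = nab" using lc_unique[OF sb nd _ l] by blast
qed



lemma quad_neg:
  fixes a c :: real
  assumes "a \<noteq> 0"
  shows "2 * (- a / (\<bar>c\<bar> + 1)) * a + (- a / (\<bar>c\<bar> + 1))\<^sup>2 * c < 0"
proof -
  define d where "d = \<bar>c\<bar> + 1"
  have d: "d > 0" "\<bar>c\<bar> \<le> d" unfolding d_def by auto
  have a2: "a\<^sup>2 > 0" using assms by simp
  have "(- a / d)\<^sup>2 * c \<le> (- a / d)\<^sup>2 * \<bar>c\<bar>" by (intro mult_left_mono) auto
  also have "\<dots> \<le> (- a / d)\<^sup>2 * d" by (intro mult_left_mono d) auto
  also have "\<dots> = a\<^sup>2 / d" using d by (simp add: power2_eq_square field_simps)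
  finally have "(- a / d)\<^sup>2 * c \<le> a\<^sup>2 / d" .
  moreover have "2 * (- a / d) * a = - 2 * (a\<^sup>2 / d)" by (simp add: power2_eq_square field_simps)
  moreover have "a\<^sup>2 / d > 0" using a2 d by simp
  ultimately show ?thesis unfolding d_def[symmetric] by linarith
qed

lemma neg2:
  fixes mu :: "'a::euclidean_space \<Rightarrow> 'a \<Rightarrow> real"
  assumes lor: "lorentzian_form mu" and X: "mu X X < 0" and Y: "mu Y Y < 0" and XY: "mu X Y = 0"
  shows False
proof -
  have bl: "bilinear mu" and sy: "\<And>x y. mu x y = mu y x"
    using lor by (auto simp: lorentzian_form_def sym_bilinear_form_def)
  have dimle: "\<And>W. subspace W \<Longrightarrow> (\<forall>w\<in>W. w \<noteq> 0 \<longrightarrow> mu w w < 0) \<Longrightarrow> dim W \<le> 1"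
    using lor by (auto simp: lorentzian_form_def)
  have X0: "X \<noteq> 0" using X bilinear_lzero[OF bl] by fastforce
  have Y0: "Y \<noteq> 0" using Y bilinear_lzero[OF bl] by fastforce
  have XnY: "X \<noteq> Y" using X XY by auto
  have "X \<notin> span {Y}"
  proof
    assume "X \<in> span {Y}"
    then obtain k where k: "X = k *\<^sub>R Y" by (auto simp: span_singleton)
    then have "mu X Y = k * mu Y Y" by (simp add: bilinear_lmul[OF bl])
    then have "k = 0" using XY Y by simp
    then show False using k X0 by simp
  qed
  moreover have "independent {Y}" using Y0 by (simp add: independent_insert)
  ultimately have ind: "independent {X, Y}" using XnY by (simp add: independent_insert)
  have "dim (span {X, Y}) = 2" using dim_span_eq_card_independent[OF ind] XnY by simp
  moreover have "dim (span {X, Y}) \<le> 1"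
  proof (rule dimle)
    show "subspace (span {X, Y})" by simp
    show "\<forall>w\<in>span {X, Y}. w \<noteq> 0 \<longrightarrow> mu w w < 0"
    proof (intro ballI impI)
      fix w assume "w \<in> span {X, Y}" "w \<noteq> 0"
      then obtain a where "w - a *\<^sub>R X \<in> span {Y}" by (auto simp: span_insert)
      then obtain b where "w - a *\<^sub>R X = b *\<^sub>R Y" by (auto simp: span_singleton)
      then have w: "w = a *\<^sub>R X + b *\<^sub>R Y" by (simp add: algebra_simps)
      have YX: "mu Y X = 0" using XY sy by metis
      have "mu w w = a * a * mu X X + b * b * mu Y Y"
        unfolding w by (simp add: bilinear_ladd[OF bl] bilinear_radd[OF bl] bilinear_lmul[OF bl] bilinear_rmul[OF bl] XY YX)
      moreover have "a \<noteq> 0 \<or> b \<noteq> 0" using \<open>w \<noteq> 0\<close> w by auto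
      moreover have "a * a * mu X X \<le> 0" "b * b * mu Y Y \<le> 0"
        using X Y by (simp_all add: mult_nonneg_nonpos)
      moreover have "a \<noteq> 0 \<Longrightarrow> a * a * mu X X < 0" using X by (auto simp add: mult_less_0_iff zero_less_mult_iff)
      moreover have "b \<noteq> 0 \<Longrightarrow> b * b * mu Y Y < 0" using Y by (auto simp add: mult_less_0_iff zero_less_mult_iff)
      ultimately show "mu w w < 0" by linarith
    qed
  qed
  ultimately show False by simp
qed

lemma posdef_perp:
  fixes mu :: "'a::euclidean_space \<Rightarrow> 'a \<Rightarrow> real"
  assumes lor: "lorentzian_form mu" and X: "mu X X < 0" and YX: "mu Y X = 0" and Y0: "Y \<noteq> 0"
  shows "mu Y Y > 0"
proof -
  have bl: "bilinear mu" and sy: "\<And>x y. mu x y = mu y x" and nd: "nondegenerate mu"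
    using lor by (auto simp: lorentzian_form_def sym_bilinear_form_def)
  note simps = bilinear_ladd[OF bl] bilinear_radd[OF bl] bilinear_lmul[OF bl] bilinear_rmul[OF bl]
    bilinear_lsub[OF bl] bilinear_rsub[OF bl]
  have XY: "mu X Y = 0" using YX sy by metis
  show ?thesis
  proof (rule ccontr)
    assume "\<not> mu Y Y > 0"
    then consider "mu Y Y < 0" | "mu Y Y = 0" by linarith
    then show False
    proof cases
      case 1 then show False using neg2[OF lor X 1 XY] by simp
    next
      case 2
      obtain Z where Z: "mu Y Z \<noteq> 0" using nd Y0 unfolding nondegenerate_def by blast
      define Z' where "Z' = Z - (mu Z X / mu X X) *\<^sub>R X"
      have Z'X: "mu Z' X = 0" using X unfolding Z'_def by (simp add: simps)
      have YZ': "mu Y Z' = mu Y Z" unfolding Z'_def by (simp add: simps XY YX)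
      define a where "a = mu Y Z'"
      define c where "c = mu Z' Z'"
      define t where "t = - a / (\<bar>c\<bar> + 1)"
      define Y' where "Y' = Y + t *\<^sub>R Z'"
      have a0: "a \<noteq> 0" using Z YZ' a_def by simp
      have "mu Y' Y' = 2 * t * a + t\<^sup>2 * c"
        unfolding Y'_def a_def c_def using 2 sy[of Z' Y]
        by (simp add: simps power2_eq_square algebra_simps)
      then have neg: "mu Y' Y' < 0" using quad_neg[OF a0, of c] unfolding t_def by simp
      have "mu X Y' = 0" unfolding Y'_def using XY Z'X sy[of X Z'] by (simp add: simps)
      then show False using neg2[OF lor X neg] by simp
    qed
  qed
qed



lemma fwd:
  fixes br :: "'a::euclidean_space \<Rightarrow> 'a \<Rightarrow> 'a" and mu :: "'a \<Rightarrow> 'a \<Rightarrow> real"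
  assumes lor: "lorentzian_form mu" and bb: "bilinear br" and ba: "\<And>x y. br x y = - br y x"
    and isN: "is_levi_civita mu br N" and fl: "flat_connection br N"
    and X: "mu X X < 0" and kil: "\<And>u v. mu (N u X) v + mu u (N v X) = 0"
  shows "\<exists>g. riemannian_form g \<and> levi_civita g br = N"
proof -
  have bl: "bilinear mu" and sy: "\<And>x y. mu x y = mu y x" and nd: "nondegenerate mu"
    using lor by (auto simp: lorentzian_form_def sym_bilinear_form_def)
  have bN: "bilinear N" and tN: "\<And>u v. N u v - N v u = br u v"
    and mN: "\<And>u v w. mu (N u v) w + mu v (N u w) = 0"
    using isN by (auto simp: is_levi_civita_def)
  have flat: "\<And>u v w. N u (N v w) - N v (N u w) - N (br u v) w = 0"
    using fl by (auto simp: flat_connection_def)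
  note simps = bilinear_ladd[OF bl] bilinear_radd[OF bl] bilinear_lmul[OF bl] bilinear_rmul[OF bl]
    bilinear_lsub[OF bl] bilinear_rsub[OF bl] bilinear_lzero[OF bl] bilinear_rzero[OF bl]
  have a: "mu (N u X) X = 0" for u using mN[of u X X] sy[of X "N u X"] by simp
  have AX: "N X X = 0"
  proof (rule nd_eq[OF bl nd])
    fix w
    have "mu (N w X) X + mu w (N X X) = 0" by (rule kil)
    then show "mu (N X X) w = mu 0 w" using a[of w] sy[of w "N X X"] by (simp add: simps)
  qed
  define T where "T u v w = mu (N u (N v X) - N (N u v) X) w" for u v w
  have T0: "T u v w = 0" for u v w
  proof (rule s3_zero[of T])
    fix u v w
    have "N u (N v X) - N v (N u X) = N (br u v) X" using flat[of u v X] by simp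
    also have "\<dots> = N (N u v) X - N (N v u) X" using tN[of u v] bilinear_lsub[OF bN] by metis
    finally have "N u (N v X) - N (N u v) X = N v (N u X) - N (N v u) X" by (simp add: algebra_simps)
    then show "T u v w = T v u w" unfolding T_def by simp
    have e1: "mu (N u (N v X)) w = mu v (N (N u w) X)"
      using mN[of u "N v X" w] kil[of v "N u w"] by simp
    have e2: "mu (N (N u v) X) w = mu v (N u (N w X))"
      using kil[of "N u v" w] mN[of u v "N w X"] by simp
    show "T u v w = - T u w v" unfolding T_def bilinear_lsub[OF bl] e1 e2
      using sy[of v "N (N u w) X"] sy[of v "N u (N w X)"] by simp
  qed
  have comm: "N u (N v X) = N (N u v) X" for u v
  proof -
    have "N u (N v X) - N (N u v) X = 0" using T0 nd unfolding T_def nondegenerate_def by blast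
    then show ?thesis by simp
  qed
  have A0: "N v X = 0" for v
  proof (rule ccontr)
    assume ne: "N v X \<noteq> 0"
    have "N (N v X) X = N v (N X X)" using comm[of v X] by simp
    also have "\<dots> = 0" using AX bilinear_rzero[OF bN] by simp
    finally have "N (N v X) X = 0" .
    then have "mu (N v X) (N v X) = 0" using kil[of "N v X" v] by (simp add: simps)
    moreover have "mu (N v X) (N v X) > 0" by (rule posdef_perp[OF lor X a ne])
    ultimately show False by simp
  qed
  define g where "g v w = mu v w - 2 * mu X v * mu X w / mu X X" for v w
  have bg: "bilinear g"
    unfolding bilinear_def linear_iff g_def
    by (simp add: simps add_divide_distrib[symmetric] algebra_simps)
  have sg: "sym_bilinear_form g" unfolding sym_bilinear_form_def using bg sy
    by (simp add: g_def mult.commute)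
  have pos: "g x x > 0" if x0: "x \<noteq> 0" for x
  proof -
    define s where "s = mu x X / mu X X"
    define Y where "Y = x - s *\<^sub>R X"
    have YX: "mu Y X = 0" unfolding Y_def s_def using X by (simp add: simps)
    have XY: "mu X Y = 0" using YX sy by metis
    have x: "x = Y + s *\<^sub>R X" unfolding Y_def by simp
    have gx: "g x x = mu Y Y - s * s * mu X X"
      unfolding g_def x using X by (simp add: simps XY YX field_simps)
    show ?thesis
    proof (cases "Y = 0")
      case True
      then have "s \<noteq> 0" using x x0 by auto
      then have "s * s > 0" by (auto simp add: zero_less_mult_iff)
      then have "s * s * mu X X < 0" using X by (simp add: mult_pos_neg)
      then show ?thesis using gx True by (simp add: simps)
    next
      case False
      have "mu Y Y > 0" by (rule posdef_perp[OF lor X YX False])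
      moreover have "s * s * mu X X \<le> 0" using X by (simp add: mult_nonneg_nonpos)
      ultimately show ?thesis using gx by simp
    qed
  qed
  have rg: "riemannian_form g" unfolding riemannian_form_def using sg pos by simp
  have ndg: "nondegenerate g" unfolding nondegenerate_def using pos by force
  have Ng: "is_levi_civita g br N"
    unfolding is_levi_civita_def
  proof (intro conjI allI)
    show "bilinear N" by (rule bN)
    show "N u v - N v u = br u v" for u v by (rule tN)
    fix u v w
    have z: "mu X (N u v) = 0" for v using mN[of u X v] A0[of u] by (simp add: simps)
    show "g (N u v) w + g v (N u w) = 0"
      unfolding g_def using mN[of u v w] z[of v] z[of w] sy[of X "N u v"] sy[of X "N u w"]
      by (simp add: field_simps)
  qed
  show ?thesis using rg lc_eq[OF sg ndg Ng] by blast
qed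



lemma bwd:
  fixes br :: "'a::euclidean_space \<Rightarrow> 'a \<Rightarrow> 'a" and mu g :: "'a \<Rightarrow> 'a \<Rightarrow> real"
  assumes lor: "lorentzian_form mu" and rg: "riemannian_form g"
    and isN: "is_levi_civita mu br N" and isNg: "is_levi_civita g br N"
  shows "\<exists>X. mu X X < 0 \<and> (\<forall>u. N u X = 0)"
proof -
  have bl: "bilinear mu" and sy: "\<And>x y. mu x y = mu y x"
    using lor by (auto simp: lorentzian_form_def sym_bilinear_form_def)
  obtain v0 where v0: "mu v0 v0 < 0" using lor by (auto simp: lorentzian_form_def)
  have bg: "bilinear g" and syg: "\<And>x y. g x y = g y x" and gpos: "\<And>x. x \<noteq> 0 \<Longrightarrow> g x x > 0"
    using rg by (auto simp: riemannian_form_def sym_bilinear_form_def)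
  have mN: "\<And>u v w. mu (N u v) w + mu v (N u w) = 0"
    and mg: "\<And>u v w. g (N u v) w + g v (N u w) = 0"
    using isN isNg by (auto simp: is_levi_civita_def)
  note simps = bilinear_ladd[OF bl] bilinear_radd[OF bl] bilinear_lmul[OF bl] bilinear_rmul[OF bl]
    bilinear_lsub[OF bl] bilinear_rsub[OF bl] bilinear_lzero[OF bl] bilinear_rzero[OF bl]
  note gsimps = bilinear_ladd[OF bg] bilinear_radd[OF bg] bilinear_lmul[OF bg] bilinear_rmul[OF bg]
    bilinear_lsub[OF bg] bilinear_rsub[OF bg] bilinear_lzero[OF bg] bilinear_rzero[OF bg]
  define f where "f x = mu x x / g x x" for x
  have cont: "continuous_on (sphere (0::'a) 1) f"
    unfolding f_def
  proof (rule continuous_on_divide)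
    show "continuous_on (sphere 0 1) (\<lambda>x. mu x x)"
      by (rule bilinear_continuous_on_compose[OF continuous_on_id continuous_on_id bl])
    show "continuous_on (sphere 0 1) (\<lambda>x. g x x)"
      by (rule bilinear_continuous_on_compose[OF continuous_on_id continuous_on_id bg])
    show "\<forall>x\<in>sphere 0 1. g x x \<noteq> 0"
    proof
      fix x :: 'a assume "x \<in> sphere 0 1"
      then have "x \<noteq> 0" by auto
      then show "g x x \<noteq> 0" using gpos[of x] by simp
    qed
  qed
  have "sphere (0::'a) 1 \<noteq> {}" by simp
  then obtain X where Xs: "X \<in> sphere 0 1" and Xmin: "\<And>y. y \<in> sphere 0 1 \<Longrightarrow> f X \<le> f y"
    using continuous_attains_inf[OF compact_sphere _ cont] by blast
  define lam where "lam = f X"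
  have X0: "X \<noteq> 0" using Xs by auto
  have ineq: "lam * g y y \<le> mu y y" for y
  proof (cases "y = 0")
    case True then show ?thesis by (simp add: simps gsimps)
  next
    case False
    define c where "c = 1 / norm y"
    have c0: "c \<noteq> 0" using False by (simp add: c_def)
    have "c *\<^sub>R y \<in> sphere 0 1" using False by (simp add: c_def)
    then have "lam \<le> f (c *\<^sub>R y)" using Xmin lam_def by blast
    also have "f (c *\<^sub>R y) = mu y y / g y y" unfolding f_def using c0 by (simp add: simps gsimps)
    finally show ?thesis using gpos[OF False] by (simp add: pos_le_divide_eq)
  qed
  have v00: "v0 \<noteq> 0" using v0 by (auto simp: simps)
  have lamneg: "lam < 0"
  proof -
    have "lam * g v0 v0 < 0" using ineq[of v0] v0 by linarith
    then show ?thesis using gpos[OF v00] by (simp add: mult_less_0_iff)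
  qed
  have XX: "mu X X = lam * g X X" unfolding lam_def f_def using gpos[OF X0] by simp
  have XXneg: "mu X X < 0" using XX lamneg gpos[OF X0] by (simp add: mult_neg_pos)
  have eig: "mu X w = lam * g X w" for w
  proof (rule ccontr)
    assume ne: "mu X w \<noteq> lam * g X w"
    define a where "a = mu X w - lam * g X w"
    define c where "c = mu w w - lam * g w w"
    define t where "t = - a / (\<bar>c\<bar> + 1)"
    have a0: "a \<noteq> 0" using ne a_def by simp
    have "mu (X + t *\<^sub>R w) (X + t *\<^sub>R w) - lam * g (X + t *\<^sub>R w) (X + t *\<^sub>R w) = 2 * t * a + t\<^sup>2 * c"
      unfolding a_def c_def using XX sy[of w X] syg[of w X]
      by (simp add: simps gsimps power2_eq_square algebra_simps)
    also have "\<dots> < 0" unfolding t_def by (rule quad_neg[OF a0])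
    finally show False using ineq[of "X + t *\<^sub>R w"] by linarith
  qed
  have NX: "N u X = 0" for u
  proof (rule ccontr)
    define Y where "Y = N u X"
    assume "N u X \<noteq> 0"
    then have Y0: "Y \<noteq> 0" by (simp add: Y_def)
    have eY: "mu Y w = lam * g Y w" for w
    proof -
      have "mu Y w = - mu X (N u w)" using mN[of u X w] unfolding Y_def by linarith
      also have "\<dots> = - lam * g X (N u w)" using eig[of "N u w"] by simp
      also have "\<dots> = lam * g Y w" using mg[of u X w] unfolding Y_def
        by (simp add: algebra_simps) (metis add.inverse_unique add.commute mult_minus_right)
      finally show ?thesis .
    qed
    have gYX: "g Y X = 0" using mg[of u X X] syg[of X "N u X"] unfolding Y_def by simp
    have "mu Y X = 0" using eY[of X] gYX by simp
    then have "mu Y Y > 0" using posdef_perp[OF lor XXneg _ Y0] by simp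
    moreover have "mu Y Y < 0" using eY[of Y] gpos[OF Y0] lamneg by (simp add: mult_neg_pos)
    ultimately show False by simp
  qed
  show ?thesis using XXneg NX by blast
qed


theorem corollary1p3:
  fixes br :: "'a::euclidean_space \<Rightarrow> 'a \<Rightarrow> 'a" and mu :: "'a \<Rightarrow> 'a \<Rightarrow> real"
  assumes "lie_algebra br"
    and "lorentzian_form mu"
    and "flat_connection br (levi_civita mu br)"
  shows "(\<exists>X. mu X X < 0 \<and> killing mu br X) \<longleftrightarrow>
         (\<exists>g. riemannian_form g \<and> levi_civita g br = levi_civita mu br)"
proof -
  have la: "bilinear br \<and> (\<forall>x y. br x y = - br y x)"
    using assms(1) unfolding lie_algebra_def by (elim conjE) (intro conjI)
  then have bb: "bilinear br" by (rule conjunct1)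
  have ba: "\<And>x y. br x y = - br y x" using la by (elim conjE allE)
  have sbm: "sym_bilinear_form mu" and ndm: "nondegenerate mu"
    using assms(2) by (auto simp: lorentzian_form_def)
  then have bl: "bilinear mu" by (simp add: sym_bilinear_form_def)
  have isN: "is_levi_civita mu br (levi_civita mu br)" by (rule lc_is[OF sbm ndm bb ba])
  show ?thesis
  proof
    assume "\<exists>X. mu X X < 0 \<and> killing mu br X"
    then obtain X where X: "mu X X < 0" and k: "killing mu br X" by blast
    have kil: "\<And>u v. mu (levi_civita mu br u X) v + mu u (levi_civita mu br v X) = 0"
      using k unfolding killing_def by blast
    show "\<exists>g. riemannian_form g \<and> levi_civita g br = levi_civita mu br"
    proof -
      note f = fwd[where mu=mu and br=br and N="levi_civita mu br" and X=X]
      show ?thesis by (rule f[OF assms(2) bb ba isN assms(3) X kil])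
    qed
  next
    assume "\<exists>g. riemannian_form g \<and> levi_civita g br = levi_civita mu br"
    then obtain g where rg: "riemannian_form g" and eq: "levi_civita g br = levi_civita mu br" by blast
    have sbg: "sym_bilinear_form g" using rg unfolding riemannian_form_def by blast
    have ndg: "nondegenerate g" unfolding nondegenerate_def
    proof (intro allI impI)
      fix x assume "\<forall>y. g x y = 0"
      then have "g x x = 0" by blast
      then show "x = 0" using rg unfolding riemannian_form_def by force
    qed
    have isNg: "is_levi_civita g br (levi_civita mu br)"
      using lc_is[OF sbg ndg bb ba] eq by simp
    obtain X where X: "mu X X < 0" and NX: "\<And>u. levi_civita mu br u X = 0"
      using bwd[where mu=mu and g=g and br=br and N="levi_civita mu br", OF assms(2) rg isN isNg] by blast
    have "killing mu br X" unfolding killing_def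
      by (simp add: NX bilinear_lzero[OF bl] bilinear_rzero[OF bl])
    then show "\<exists>X. mu X X < 0 \<and> killing mu br X" using X by blast
  qed
qed

end
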